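(* Let $\Gamma$ be a finitely generated infinite group, $\{\Gamma_n\}_{n\in\mathbb N}$ finite-index normal subgroups, $f\in\mathbb{R}\Gamma$ well-balanced and $g\in\mathbb{R}\Gamma$. There exists $C>0$ such that whenever $\pi_n(g)=h\,\pi_n(f)$ for some $n\in\mathbb{N}$ and $h\in\mathbb{R}(\Gamma/\Gamma_n)$, one has $$\max_{s\Gamma_n\in\Gamma/\Gamma_n}h_{s\Gamma_n}-\min_{s\Gamma_n\in\Gamma/\Gamma_n}h_{s\Gamma_n}\le C.$$
   Context: $f\in\mathbb{R}\Gamma$ is well-balanced if $\sum_sf_s=0$, $f_s\le0$ for $s\ne e$, $f_s=f_{s^{-1}}$, and the support of $f$ generates $\Gamma$. $\pi_n:\mathbb{R}\Gamma\to\mathbb{R}(\Gamma/\Gamma_n)$ is the ring homomorphism induced by the quotient map, $\pi_n(g)_{s\Gamma_n}=\sum_{t\in s\Gamma_n}g_t$; products in $\mathbb{R}(\Gamma/\Gamma_n)$ are convolutions over the finite group $\Gamma/\Gamma_n$. *)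

theory Defs
  imports Complex_Main "HOL-Algebra.Algebra"
begin

(* Elements of the real group ring R[G]: real-valued functions on carrier G
   with finite support, vanishing outside the carrier. *)
definition grp_supp :: "('a, 'b) monoid_scheme \<Rightarrow> ('a \<Rightarrow> real) \<Rightarrow> 'a set" where
  "grp_supp G f = {x \<in> carrier G. f x \<noteq> 0}"

definition in_group_ring :: "('a, 'b) monoid_scheme \<Rightarrow> ('a \<Rightarrow> real) \<Rightarrow> bool" where
  "in_group_ring G f \<longleftrightarrow> finite (grp_supp G f) \<and> (\<forall>x. x \<notin> carrier G \<longrightarrow> f x = 0)"

definition finitely_generated :: "('a, 'b) monoid_scheme \<Rightarrow> bool" where
  "finitely_generated G \<longleftrightarrow> (\<exists>S. finite S \<and> S \<subseteq> carrier G \<and> generate G S = carrier G)"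

definition well_balanced :: "('a, 'b) monoid_scheme \<Rightarrow> ('a \<Rightarrow> real) \<Rightarrow> bool" where
  "well_balanced G f \<longleftrightarrow>
     in_group_ring G f \<and>
     (\<Sum>s\<in>grp_supp G f. f s) = 0 \<and>
     (\<forall>s\<in>carrier G. s \<noteq> \<one>\<^bsub>G\<^esub> \<longrightarrow> f s \<le> 0) \<and>
     (\<forall>s\<in>carrier G. f s = f (inv\<^bsub>G\<^esub> s)) \<and>
     generate G (grp_supp G f) = carrier G"

(* pi_N(g)_{sN} = sum_{t in sN} g_t  (finite sum over the support) *)
definition quot_proj :: "('a, 'b) monoid_scheme \<Rightarrow> 'a set \<Rightarrow> ('a \<Rightarrow> real) \<Rightarrow> 'a set \<Rightarrow> real" where
  "quot_proj G N g c = (\<Sum>t\<in>c \<inter> grp_supp G g. g t)"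

definition quot_conv :: "('a, 'b) monoid_scheme \<Rightarrow> 'a set \<Rightarrow> ('a set \<Rightarrow> real) \<Rightarrow> ('a set \<Rightarrow> real) \<Rightarrow> 'a set \<Rightarrow> real" where
  "quot_conv G N h k c =
     (\<Sum>d\<in>carrier (G Mod N). h d * k (inv\<^bsub>G Mod N\<^esub> d \<otimes>\<^bsub>G Mod N\<^esub> c))"

end

theory Submission
  imports Defs
begin

context group begin

lemma inv_mult_bij: "c \<in> carrier G \<Longrightarrow> bij_betw (\<lambda>d. inv d \<otimes> c) (carrier G) (carrier G)"
  apply (rule bij_betw_byWitness[where f'="\<lambda>x. c \<otimes> inv x"])
  by (auto simp: inv_mult_group) (metis m_assoc inv_closed r_inv l_inv r_one l_one)+

lemma sum_k_shift:
  assumes "(\<Sum>x\<in>carrier G. k x) = (0::real)" "c \<in> carrier G"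
  shows "(\<Sum>d\<in>carrier G. k (inv d \<otimes> c)) = 0"
  using sum.reindex_bij_betw[OF inv_mult_bij[OF assms(2)], of k] assms(1) by simp

lemma cut_formula:
  fixes k h :: "'a \<Rightarrow> real"
  assumes fin: "finite (carrier G)" and s0: "(\<Sum>x\<in>carrier G. k x) = 0"
    and sym: "\<forall>x\<in>carrier G. k (inv x) = k x" and U: "U \<subseteq> carrier G"
  shows "(\<Sum>c\<in>U. \<Sum>d\<in>carrier G. h d * k (inv d \<otimes> c))
       = (\<Sum>c\<in>U. \<Sum>d\<in>carrier G - U. k (inv d \<otimes> c) * (h d - h c))"
proof -
  have step2: "(\<Sum>d\<in>carrier G. h d * k (inv d \<otimes> c)) = (\<Sum>d\<in>carrier G. k (inv d \<otimes> c) * (h d - h c))"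
    if c: "c \<in> carrier G" for c
  proof -
    have "(\<Sum>d\<in>carrier G. k (inv d \<otimes> c) * (h d - h c)) =
       (\<Sum>d\<in>carrier G. h d * k (inv d \<otimes> c)) - h c * (\<Sum>d\<in>carrier G. k (inv d \<otimes> c))"
      by (simp add: algebra_simps sum_subtractf sum_distrib_left)
    then show ?thesis using sum_k_shift[OF s0 c] by simp
  qed
  have split: "(\<Sum>d\<in>carrier G. k (inv d \<otimes> c) * (h d - h c)) =
      (\<Sum>d\<in>U. k (inv d \<otimes> c) * (h d - h c)) + (\<Sum>d\<in>carrier G - U. k (inv d \<otimes> c) * (h d - h c))" for c
    using sum.subset_diff[OF U fin] by (simp add: add.commute)
  define XX where "XX = (\<Sum>c\<in>U. \<Sum>d\<in>U. k (inv d \<otimes> c) * (h d - h c))"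
  have "XX = (\<Sum>d\<in>U. \<Sum>c\<in>U. k (inv d \<otimes> c) * (h d - h c))" unfolding XX_def by (rule sum.swap)
  also have "\<dots> = (\<Sum>d\<in>U. \<Sum>c\<in>U. - (k (inv c \<otimes> d) * (h c - h d)))"
  proof (intro sum.cong refl)
    fix d c assume "d \<in> U" "c \<in> U"
    then have dc: "d \<in> carrier G" "c \<in> carrier G" using U by auto
    have "inv (inv d \<otimes> c) = inv c \<otimes> d" using dc by (simp add: inv_mult_group)
    then have "k (inv c \<otimes> d) = k (inv d \<otimes> c)" using sym dc by (metis inv_closed m_closed)
    then show "k (inv d \<otimes> c) * (h d - h c) = - (k (inv c \<otimes> d) * (h c - h d))" by (simp add: algebra_simps)
  qed
  also have "\<dots> = - XX" unfolding XX_def by (simp add: sum_negf)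
  finally have XX0: "XX = 0" by simp
  have "(\<Sum>c\<in>U. \<Sum>d\<in>carrier G. h d * k (inv d \<otimes> c)) = (\<Sum>c\<in>U. \<Sum>d\<in>carrier G. k (inv d \<otimes> c) * (h d - h c))"
    apply (rule sum.cong[OF refl]) using step2 U by blast
  also have "\<dots> = XX + (\<Sum>c\<in>U. \<Sum>d\<in>carrier G - U. k (inv d \<otimes> c) * (h d - h c))"
    unfolding XX_def split by (simp add: sum.distrib)
  finally show ?thesis using XX0 by simp
qed

lemma cut_pos:
  fixes k h phi :: "'a \<Rightarrow> real"
  assumes fin: "finite (carrier G)" and s0: "(\<Sum>x\<in>carrier G. k x) = 0"
    and sym: "\<forall>x\<in>carrier G. k (inv x) = k x"
    and np: "\<forall>x\<in>carrier G. x \<noteq> \<one> \<longrightarrow> k x \<le> 0"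
    and phi: "\<forall>c\<in>carrier G. phi c = (\<Sum>d\<in>carrier G. h d * k (inv d \<otimes> c))"
    and ab: "a \<in> carrier G" "b \<in> carrier G" "h b < h a"
  shows "- k (inv b \<otimes> a) * (h a - h b) \<le> (\<Sum>c\<in>carrier G. \<bar>phi c\<bar>)"
proof -
  define U where "U = {c\<in>carrier G. h b < h c}"
  have U: "U \<subseteq> carrier G" unfolding U_def by auto
  define T where "T = (\<lambda>c d. k (inv d \<otimes> c) * (h d - h c))"
  have Tnn: "0 \<le> T c d" if "c \<in> U" "d \<in> carrier G - U" for c d
  proof -
    have c: "c \<in> carrier G" "h b < h c" and d: "d \<in> carrier G" "h d \<le> h b" using that unfolding U_def by auto
    have "c \<noteq> d" using c d by auto
    then have "inv d \<otimes> c \<noteq> \<one>" using c d by (metis inv_equality inv_inv inv_closed)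
    then have "k (inv d \<otimes> c) \<le> 0" using np c d by auto
    then show ?thesis unfolding T_def using c d by (intro mult_nonpos_nonpos) auto
  qed
  have aU: "a \<in> U" and bU: "b \<in> carrier G - U" using ab unfolding U_def by auto
  have "T a b \<le> (\<Sum>d\<in>carrier G - U. T a d)"
    using fin bU Tnn[OF aU] by (intro member_le_sum) auto
  also have "\<dots> \<le> (\<Sum>c\<in>U. \<Sum>d\<in>carrier G - U. T c d)"
    using fin U aU Tnn by (intro member_le_sum[where f="\<lambda>c. \<Sum>d\<in>carrier G - U. T c d"] sum_nonneg)
      (auto intro: finite_subset)
  also have "\<dots> = (\<Sum>c\<in>U. \<Sum>d\<in>carrier G. h d * k (inv d \<otimes> c))"
    unfolding T_def using cut_formula[OF fin s0 sym U] by simp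
  also have "\<dots> = (\<Sum>c\<in>U. phi c)" using phi U by (intro sum.cong) auto
  also have "\<dots> \<le> (\<Sum>c\<in>U. \<bar>phi c\<bar>)" by (intro sum_mono) auto
  also have "\<dots> \<le> (\<Sum>c\<in>carrier G. \<bar>phi c\<bar>)" using fin U by (intro sum_mono2) auto
  finally show ?thesis unfolding T_def by (simp add: algebra_simps)
qed

lemma max_prin:
  fixes k h phi :: "'a \<Rightarrow> real"
  assumes fin: "finite (carrier G)" and s0: "(\<Sum>x\<in>carrier G. k x) = 0"
    and sym: "\<forall>x\<in>carrier G. k (inv x) = k x"
    and np: "\<forall>x\<in>carrier G. x \<noteq> \<one> \<longrightarrow> k x \<le> 0"
    and phi: "\<forall>c\<in>carrier G. phi c = (\<Sum>d\<in>carrier G. h d * k (inv d \<otimes> c))"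
    and M: "\<forall>c\<in>carrier G. h c \<le> M"
    and z: "\<forall>c\<in>carrier G. h c = M \<longrightarrow> phi c = 0"
    and c: "c \<in> carrier G" "h c = M" and d: "d \<in> carrier G" "h d < M"
  shows "k (inv d \<otimes> c) = 0"
proof -
  define U where "U = {c\<in>carrier G. h c = M}"
  have U: "U \<subseteq> carrier G" unfolding U_def by auto
  define T where "T = (\<lambda>c d. k (inv d \<otimes> c) * (h d - h c))"
  have Tnn: "0 \<le> T c d" if "c \<in> U" "d \<in> carrier G - U" for c d
  proof -
    have c: "c \<in> carrier G" "h c = M" and d: "d \<in> carrier G" "h d < M" using that M unfolding U_def
      by (auto simp: order.order_iff_strict)
    have "c \<noteq> d" using c d by auto
    then have "inv d \<otimes> c \<noteq> \<one>" using c d by (metis inv_equality inv_inv inv_closed)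
    then have "k (inv d \<otimes> c) \<le> 0" using np c d by auto
    then show ?thesis unfolding T_def using c d by (intro mult_nonpos_nonpos) auto
  qed
  have "(\<Sum>c\<in>U. \<Sum>d\<in>carrier G - U. T c d) = (\<Sum>c\<in>U. \<Sum>d\<in>carrier G. h d * k (inv d \<otimes> c))"
    unfolding T_def using cut_formula[OF fin s0 sym U] by simp
  also have "\<dots> = (\<Sum>c\<in>U. phi c)" using phi U by (intro sum.cong) auto
  also have "\<dots> = 0" using z unfolding U_def by (intro sum.neutral) auto
  finally have S0: "(\<Sum>c\<in>U. \<Sum>d\<in>carrier G - U. T c d) = 0" .
  have finU: "finite U" using fin U by (rule finite_subset[rotated])
  have cU: "c \<in> U" and dU: "d \<in> carrier G - U" using c d unfolding U_def by auto
  have "(\<Sum>d\<in>carrier G - U. T c d) = 0"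
  proof -
    have "\<forall>x\<in>U. (\<Sum>d\<in>carrier G - U. T x d) = 0"
      using sum_nonneg_eq_0_iff[OF finU, of "\<lambda>c. \<Sum>d\<in>carrier G - U. T c d"] S0 Tnn
      by (meson sum_nonneg)
    then show ?thesis using cU by blast
  qed
  then have "T c d = 0"
    using sum_nonneg_eq_0_iff[of "carrier G - U" "T c"] fin Tnn[OF cU] dU by auto
  then show ?thesis unfolding T_def using c d by simp
qed

end


lemma (in group) word_bound:
  assumes "x \<in> generate G S" "S \<subseteq> carrier G"
  shows "\<exists>m::nat. \<forall>F::'a\<Rightarrow>real. \<forall>L\<ge>0. (\<forall>a\<in>carrier G. \<forall>y\<in>S. \<bar>F a - F (a \<otimes> y)\<bar> \<le> L)
            \<longrightarrow> (\<forall>a\<in>carrier G. \<bar>F a - F (a \<otimes> x)\<bar> \<le> real m * L)"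
  using assms(1)
proof (induction x rule: generate.induct)
  case one
  then show ?case by (intro exI[of _ 0]) auto
next
  case (incl y)
  then show ?case by (intro exI[of _ 1]) auto
next
  case (inv y)
  show ?case
  proof (intro exI[of _ 1] allI impI ballI)
    fix F :: "'a \<Rightarrow> real" and L :: real and a
    assume L: "0 \<le> L" "\<forall>a\<in>carrier G. \<forall>y\<in>S. \<bar>F a - F (a \<otimes> y)\<bar> \<le> L" and a: "a \<in> carrier G"
    have y: "y \<in> carrier G" using inv assms(2) by auto
    have "\<bar>F (a \<otimes> inv y) - F (a \<otimes> inv y \<otimes> y)\<bar> \<le> L" using L inv y a by auto
    moreover have "a \<otimes> inv y \<otimes> y = a" using a y by (simp add: m_assoc)
    ultimately show "\<bar>F a - F (a \<otimes> inv y)\<bar> \<le> real 1 * L" by simp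
  qed
next
  case (eng x1 x2)
  then obtain m1 m2 where m1: "\<forall>F::'a\<Rightarrow>real. \<forall>L\<ge>0. (\<forall>a\<in>carrier G. \<forall>y\<in>S. \<bar>F a - F (a \<otimes> y)\<bar> \<le> L)
            \<longrightarrow> (\<forall>a\<in>carrier G. \<bar>F a - F (a \<otimes> x1)\<bar> \<le> real m1 * L)"
    and m2: "\<forall>F::'a\<Rightarrow>real. \<forall>L\<ge>0. (\<forall>a\<in>carrier G. \<forall>y\<in>S. \<bar>F a - F (a \<otimes> y)\<bar> \<le> L)
            \<longrightarrow> (\<forall>a\<in>carrier G. \<bar>F a - F (a \<otimes> x2)\<bar> \<le> real m2 * L)" by blast
  have x: "x1 \<in> carrier G" "x2 \<in> carrier G"
    using eng.hyps generate_in_carrier assms(2) by auto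
  show ?case
  proof (intro exI[of _ "m1+m2"] allI impI ballI)
    fix F :: "'a \<Rightarrow> real" and L :: real and a
    assume L: "0 \<le> L" "\<forall>a\<in>carrier G. \<forall>y\<in>S. \<bar>F a - F (a \<otimes> y)\<bar> \<le> L" and a: "a \<in> carrier G"
    have 1: "\<bar>F a - F (a \<otimes> x1)\<bar> \<le> real m1 * L" using m1 L a by blast
    have 2: "\<bar>F (a \<otimes> x1) - F (a \<otimes> x1 \<otimes> x2)\<bar> \<le> real m2 * L" using m2 L a x by blast
    have "a \<otimes> x1 \<otimes> x2 = a \<otimes> (x1 \<otimes> x2)" using a x by (simp add: m_assoc)
    then show "\<bar>F a - F (a \<otimes> (x1 \<otimes> x2))\<bar> \<le> real (m1 + m2) * L" using 1 2 by (simp add: algebra_simps)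
  qed
qed

lemma (in group) closure_gen:
  assumes "x \<in> generate G S" "S \<subseteq> carrier G" "A \<subseteq> carrier G"
    and "\<forall>a\<in>A. \<forall>y\<in>S. a \<otimes> y \<in> A" and "\<forall>a\<in>A. \<forall>y\<in>S. a \<otimes> inv y \<in> A"
  shows "\<forall>a\<in>A. a \<otimes> x \<in> A"
  using assms(1)
proof (induction x rule: generate.induct)
  case one
  then show ?case using assms(3) by auto
next
  case (incl h)
  then show ?case using assms by auto
next
  case (inv h)
  then show ?case using assms by auto
next
  case (eng x1 x2)
  have x: "x1 \<in> carrier G" "x2 \<in> carrier G"
    using eng.hyps generate_in_carrier assms(2) by auto
  show ?case
  proof
    fix a assume a: "a \<in> A"
    then have "a \<otimes> x1 \<otimes> x2 \<in> A" using eng.IH by blast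
    then show "a \<otimes> (x1 \<otimes> x2) \<in> A" using a x assms(3) by (auto simp: m_assoc)
  qed
qed


context
  fixes G :: "('a,'b) monoid_scheme" and N :: "'a set" and f :: "'a \<Rightarrow> real"
  assumes nrm: "N \<lhd> G" and finQ: "finite (carrier (G Mod N))" and wb: "well_balanced G f"
begin

lemma grp: "group G" using nrm normal_def by blast
lemma sbg: "subgroup N G" using nrm normal_imp_subgroup by blast
lemma grpQ: "group (G Mod N)" using nrm normal.factorgroup_is_group by blast

lemma Qdesc: "c \<in> carrier (G Mod N) \<longleftrightarrow> (\<exists>a\<in>carrier G. c = N #>\<^bsub>G\<^esub> a)"
  by (auto simp: carrier_FactGroup)

lemma Qeq: "carrier (G Mod N) = rcosets\<^bsub>G\<^esub> N" by (simp add: FactGroup_def)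

lemma coset_rep: "a \<in> carrier G \<Longrightarrow> t \<in> N #>\<^bsub>G\<^esub> a \<Longrightarrow> N #>\<^bsub>G\<^esub> a = N #>\<^bsub>G\<^esub> t \<and> t \<in> carrier G"
  using group.repr_independence[OF grp _ _ sbg] subgroup.elemrcos_carrier[OF sbg grp] by blast

lemma Qsub: "c \<in> carrier (G Mod N) \<Longrightarrow> c \<subseteq> carrier G"
  using Qdesc subgroup.elemrcos_carrier[OF sbg grp] by blast

lemma sum_part:
  assumes u: "in_group_ring G u"
  shows "(\<Sum>c\<in>carrier (G Mod N). \<Sum>t\<in>c \<inter> grp_supp G u. v t) = (\<Sum>t\<in>grp_supp G u. v t)"
proof -
  have fin: "finite (grp_supp G u)" using u unfolding in_group_ring_def by blast
  have "grp_supp G u = (\<Union>c\<in>carrier (G Mod N). c \<inter> grp_supp G u)"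
  proof -
    have "grp_supp G u \<subseteq> carrier G" unfolding grp_supp_def by auto
    moreover have "\<Union>(rcosets\<^bsub>G\<^esub> N) = carrier G" using group.rcosets_part_G[OF grp sbg] .
    ultimately show ?thesis unfolding Qeq by blast
  qed
  moreover have "(\<Sum>t\<in>(\<Union>c\<in>carrier (G Mod N). c \<inter> grp_supp G u). v t)
      = (\<Sum>c\<in>carrier (G Mod N). \<Sum>t\<in>c \<inter> grp_supp G u. v t)"
  proof (rule sum.UNION_disjoint[OF finQ])
    show "\<forall>i\<in>carrier (G Mod N). finite (i \<inter> grp_supp G u)" using fin by auto
    show "\<forall>i\<in>carrier (G Mod N). \<forall>j\<in>carrier (G Mod N). i \<noteq> j \<longrightarrow> i \<inter> grp_supp G u \<inter> (j \<inter> grp_supp G u) = {}"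
      using group.rcos_disjoint[OF grp sbg] unfolding Qeq pairwise_def disjnt_def by blast
  qed
  ultimately show ?thesis by simp
qed

lemma supp_inv: "t \<in> grp_supp G f \<Longrightarrow> inv\<^bsub>G\<^esub> t \<in> grp_supp G f \<and> f (inv\<^bsub>G\<^esub> t) = f t"
  using wb group.inv_closed[OF grp] unfolding well_balanced_def grp_supp_def by auto

lemma k_sum: "(\<Sum>c\<in>carrier (G Mod N). quot_proj G N f c) = 0"
  using sum_part[of f f] wb unfolding quot_proj_def well_balanced_def by simp

lemma k_sym: assumes c: "c \<in> carrier (G Mod N)"
  shows "quot_proj G N f (inv\<^bsub>G Mod N\<^esub> c) = quot_proj G N f c"
proof -
  have i: "inv\<^bsub>G Mod N\<^esub> c = (\<lambda>x. inv\<^bsub>G\<^esub> x) ` c"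
    using normal.inv_FactGroup[OF nrm c] unfolding SET_INV_def by auto
  have cc: "c \<subseteq> carrier G" using Qsub c .
  have im: "(\<lambda>x. inv\<^bsub>G\<^esub> x) ` c \<inter> grp_supp G f = (\<lambda>x. inv\<^bsub>G\<^esub> x) ` (c \<inter> grp_supp G f)"
  proof
    show "(\<lambda>x. inv\<^bsub>G\<^esub> x) ` c \<inter> grp_supp G f \<subseteq> (\<lambda>x. inv\<^bsub>G\<^esub> x) ` (c \<inter> grp_supp G f)"
    proof
      fix x assume "x \<in> (\<lambda>x. inv\<^bsub>G\<^esub> x) ` c \<inter> grp_supp G f"
      then obtain t where t: "t \<in> c" "x = inv\<^bsub>G\<^esub> t" "x \<in> grp_supp G f" by auto
      have "inv\<^bsub>G\<^esub> x = t" using t cc group.inv_inv[OF grp] by auto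
      then have "t \<in> grp_supp G f" using supp_inv[OF t(3)] by simp
      then show "x \<in> (\<lambda>x. inv\<^bsub>G\<^esub> x) ` (c \<inter> grp_supp G f)" using t by auto
    qed
  qed (use supp_inv in auto)
  have inj: "inj_on (\<lambda>x. inv\<^bsub>G\<^esub> x) (c \<inter> grp_supp G f)"
    using cc group.inv_inj[OF grp] by (meson inj_on_subset inf.coboundedI1)
  show ?thesis unfolding quot_proj_def i im sum.reindex[OF inj]
    using supp_inv by (intro sum.cong) auto
qed

lemma one_in_coset: "a \<in> carrier G \<Longrightarrow> \<one>\<^bsub>G\<^esub> \<in> N #>\<^bsub>G\<^esub> a \<Longrightarrow> N #>\<^bsub>G\<^esub> a = N"
  using coset_rep[of a "\<one>\<^bsub>G\<^esub>"] group.coset_join2[OF grp _ sbg] subgroup.one_closed[OF sbg]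
  by (metis subgroup.mem_carrier[OF sbg])

lemma k_np: assumes c: "c \<in> carrier (G Mod N)" "c \<noteq> \<one>\<^bsub>G Mod N\<^esub>"
  shows "quot_proj G N f c \<le> 0"
proof -
  obtain a where a: "a \<in> carrier G" "c = N #>\<^bsub>G\<^esub> a" using c Qdesc by blast
  have "\<one>\<^bsub>G\<^esub> \<notin> c" using one_in_coset a c by auto
  then show ?thesis unfolding quot_proj_def using wb Qsub[OF c(1)] unfolding well_balanced_def
    by (intro sum_nonpos) auto
qed

lemma edge:
  assumes a: "a \<in> carrier G" and y: "y \<in> grp_supp G f"
    and ne: "N #>\<^bsub>G\<^esub> (a \<otimes>\<^bsub>G\<^esub> y) \<noteq> N #>\<^bsub>G\<^esub> a"
  shows "y \<noteq> \<one>\<^bsub>G\<^esub> \<and> quot_proj G N f (inv\<^bsub>G Mod N\<^esub> (N #>\<^bsub>G\<^esub> (a \<otimes>\<^bsub>G\<^esub> y)) \<otimes>\<^bsub>G Mod N\<^esub> (N #>\<^bsub>G\<^esub> a)) \<le> f y"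
proof -
  interpret G: group G by (rule grp)
  interpret N: normal N G by (rule nrm)
  have yc: "y \<in> carrier G" using y unfolding grp_supp_def by auto
  have ay: "a \<otimes>\<^bsub>G\<^esub> y \<in> carrier G" using a yc by simp
  have y1: "y \<noteq> \<one>\<^bsub>G\<^esub>"
  proof
    assume "y = \<one>\<^bsub>G\<^esub>"
    then have "a \<otimes>\<^bsub>G\<^esub> y = a" using a by simp
    then show False using ne by simp
  qed
  have BQ: "N #>\<^bsub>G\<^esub> (a \<otimes>\<^bsub>G\<^esub> y) \<in> carrier (G Mod N)" using Qdesc[of "N #>\<^bsub>G\<^esub> (a \<otimes>\<^bsub>G\<^esub> y)"] ay by blast
  have "inv\<^bsub>G Mod N\<^esub> (N #>\<^bsub>G\<^esub> (a \<otimes>\<^bsub>G\<^esub> y)) = N #>\<^bsub>G\<^esub> inv\<^bsub>G\<^esub> (a \<otimes>\<^bsub>G\<^esub> y)"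
    using N.inv_FactGroup[OF BQ] N.rcos_inv[OF ay] by simp
  then have eq: "inv\<^bsub>G Mod N\<^esub> (N #>\<^bsub>G\<^esub> (a \<otimes>\<^bsub>G\<^esub> y)) \<otimes>\<^bsub>G Mod N\<^esub> (N #>\<^bsub>G\<^esub> a) = N #>\<^bsub>G\<^esub> inv\<^bsub>G\<^esub> y"
    using N.rcos_sum[of "inv\<^bsub>G\<^esub> (a \<otimes>\<^bsub>G\<^esub> y)" a] a yc by (simp add: G.inv_mult_group G.m_assoc)
  have Xne: "N #>\<^bsub>G\<^esub> inv\<^bsub>G\<^esub> y \<noteq> N"
  proof
    assume "N #>\<^bsub>G\<^esub> inv\<^bsub>G\<^esub> y = N"
    then have "inv\<^bsub>G\<^esub> y \<in> N" using G.rcos_self[of "inv\<^bsub>G\<^esub> y" N] sbg yc by auto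
    then have yN: "y \<in> N" using yc by (metis G.inv_inv N.m_inv_closed)
    have "a \<otimes>\<^bsub>G\<^esub> y \<otimes>\<^bsub>G\<^esub> inv\<^bsub>G\<^esub> a \<in> N" using N.inv_op_closed2[OF a yN] .
    then have "a \<otimes>\<^bsub>G\<^esub> y \<otimes>\<^bsub>G\<^esub> inv\<^bsub>G\<^esub> a \<otimes>\<^bsub>G\<^esub> a \<in> N #>\<^bsub>G\<^esub> a" using G.rcosI[of _ N a] a N.subset by blast
    moreover have "a \<otimes>\<^bsub>G\<^esub> y \<otimes>\<^bsub>G\<^esub> inv\<^bsub>G\<^esub> a \<otimes>\<^bsub>G\<^esub> a = a \<otimes>\<^bsub>G\<^esub> y" using a yc by (simp add: G.m_assoc)
    ultimately have "N #>\<^bsub>G\<^esub> a = N #>\<^bsub>G\<^esub> (a \<otimes>\<^bsub>G\<^esub> y)" using G.repr_independence[OF _ a sbg] by simp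
    then show False using ne by simp
  qed
  have iyc: "inv\<^bsub>G\<^esub> y \<in> carrier G" using yc by simp
  have one_notin: "\<one>\<^bsub>G\<^esub> \<notin> N #>\<^bsub>G\<^esub> inv\<^bsub>G\<^esub> y" using one_in_coset[OF iyc] Xne by blast
  have Xsub: "N #>\<^bsub>G\<^esub> inv\<^bsub>G\<^esub> y \<subseteq> carrier G" using Qsub[of "N #>\<^bsub>G\<^esub> inv\<^bsub>G\<^esub> y"] Qdesc[of "N #>\<^bsub>G\<^esub> inv\<^bsub>G\<^esub> y"] iyc by blast
  have iy: "inv\<^bsub>G\<^esub> y \<in> (N #>\<^bsub>G\<^esub> inv\<^bsub>G\<^esub> y) \<inter> grp_supp G f" using supp_inv[OF y] G.rcos_self[OF iyc sbg] by auto
  have fin: "finite ((N #>\<^bsub>G\<^esub> inv\<^bsub>G\<^esub> y) \<inter> grp_supp G f)" using wb unfolding well_balanced_def in_group_ring_def by (meson finite_Int)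
  have "quot_proj G N f (N #>\<^bsub>G\<^esub> inv\<^bsub>G\<^esub> y) = f (inv\<^bsub>G\<^esub> y) + (\<Sum>t\<in>(N #>\<^bsub>G\<^esub> inv\<^bsub>G\<^esub> y) \<inter> grp_supp G f - {inv\<^bsub>G\<^esub> y}. f t)"
    unfolding quot_proj_def using sum.remove[OF fin iy] by simp
  also have "\<dots> \<le> f (inv\<^bsub>G\<^esub> y)"
    apply (simp only: add_le_same_cancel1)
    apply (rule sum_nonpos)
  proof -
    fix x assume x: "x \<in> (N #>\<^bsub>G\<^esub> inv\<^bsub>G\<^esub> y) \<inter> grp_supp G f - {inv\<^bsub>G\<^esub> y}"
    then have "x \<in> carrier G" "x \<noteq> \<one>\<^bsub>G\<^esub>" using Xsub one_notin by auto
    then show "f x \<le> 0" using wb unfolding well_balanced_def by blast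
  qed
  finally show ?thesis using eq supp_inv[OF y] y1 by simp
qed

lemma phi_bound:
  assumes g: "in_group_ring G g"
  shows "(\<Sum>c\<in>carrier (G Mod N). \<bar>quot_proj G N g c\<bar>) \<le> (\<Sum>t\<in>grp_supp G g. \<bar>g t\<bar>)"
proof -
  have "(\<Sum>c\<in>carrier (G Mod N). \<bar>quot_proj G N g c\<bar>) \<le> (\<Sum>c\<in>carrier (G Mod N). \<Sum>t\<in>c \<inter> grp_supp G g. \<bar>g t\<bar>)"
    unfolding quot_proj_def by (intro sum_mono sum_abs)
  also have "\<dots> = (\<Sum>t\<in>grp_supp G g. \<bar>g t\<bar>)" using sum_part[OF g] .
  finally show ?thesis .
qed

lemma k_facts:
  "(\<Sum>x\<in>carrier (G Mod N). quot_proj G N f x) = 0"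
  "\<forall>x\<in>carrier (G Mod N). quot_proj G N f (inv\<^bsub>G Mod N\<^esub> x) = quot_proj G N f x"
  "\<forall>x\<in>carrier (G Mod N). x \<noteq> \<one>\<^bsub>G Mod N\<^esub> \<longrightarrow> quot_proj G N f x \<le> 0"
  using k_sum k_sym k_np by auto

lemma lip:
  assumes g: "in_group_ring G g"
    and eqn: "\<forall>c\<in>carrier (G Mod N). quot_proj G N g c = quot_conv G N h (quot_proj G N f) c"
    and a: "a \<in> carrier G" and y: "y \<in> grp_supp G f"
    and w: "w > 0" "\<forall>y\<in>grp_supp G f. y \<noteq> \<one>\<^bsub>G\<^esub> \<longrightarrow> f y \<le> - w"
  shows "\<bar>h (N #>\<^bsub>G\<^esub> a) - h (N #>\<^bsub>G\<^esub> (a \<otimes>\<^bsub>G\<^esub> y))\<bar> * w \<le> (\<Sum>t\<in>grp_supp G g. \<bar>g t\<bar>)"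
proof -
  interpret G: group G by (rule grp)
  interpret Q: group "G Mod N" by (rule grpQ)
  define A where "A = N #>\<^bsub>G\<^esub> a"
  define B where "B = N #>\<^bsub>G\<^esub> (a \<otimes>\<^bsub>G\<^esub> y)"
  have yc: "y \<in> carrier G" using y unfolding grp_supp_def by auto
  have AQ: "A \<in> carrier (G Mod N)" and BQ: "B \<in> carrier (G Mod N)" unfolding A_def B_def using Qdesc a yc by auto
  define k where "k = quot_proj G N f"
  have phi: "\<forall>c\<in>carrier (G Mod N). quot_proj G N g c = (\<Sum>d\<in>carrier (G Mod N). h d * k (inv\<^bsub>G Mod N\<^esub> d \<otimes>\<^bsub>G Mod N\<^esub> c))"
    using eqn unfolding quot_conv_def k_def by simp
  note cp = Q.cut_pos[OF finQ k_facts[folded k_def] phi]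
  have pb: "(\<Sum>c\<in>carrier (G Mod N). \<bar>quot_proj G N g c\<bar>) \<le> (\<Sum>t\<in>grp_supp G g. \<bar>g t\<bar>)" using phi_bound[OF g] .
  show ?thesis
  proof (cases "A = B")
    case True
    then show ?thesis unfolding A_def B_def by (simp add: sum_nonneg)
  next
    case False
    then have e: "y \<noteq> \<one>\<^bsub>G\<^esub>" "k (inv\<^bsub>G Mod N\<^esub> B \<otimes>\<^bsub>G Mod N\<^esub> A) \<le> f y"
      using edge[OF a y] unfolding A_def B_def k_def by auto
    have K: "k (inv\<^bsub>G Mod N\<^esub> B \<otimes>\<^bsub>G Mod N\<^esub> A) \<le> - w" using e w y by force
    have K2: "k (inv\<^bsub>G Mod N\<^esub> A \<otimes>\<^bsub>G Mod N\<^esub> B) = k (inv\<^bsub>G Mod N\<^esub> B \<otimes>\<^bsub>G Mod N\<^esub> A)"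
    proof -
      have "inv\<^bsub>G Mod N\<^esub> (inv\<^bsub>G Mod N\<^esub> B \<otimes>\<^bsub>G Mod N\<^esub> A) = inv\<^bsub>G Mod N\<^esub> A \<otimes>\<^bsub>G Mod N\<^esub> B"
        using AQ BQ by (metis Q.inv_mult_group Q.inv_inv Q.inv_closed)
      then show ?thesis using k_facts(2)[folded k_def] AQ BQ by (metis Q.inv_closed Q.m_closed)
    qed
    consider "h B < h A" | "h A < h B" | "h A = h B" by linarith
    then show ?thesis
    proof cases
      case 1
      have "w * (h A - h B) \<le> - k (inv\<^bsub>G Mod N\<^esub> B \<otimes>\<^bsub>G Mod N\<^esub> A) * (h A - h B)"
        using K 1 by (intro mult_right_mono) auto
      also have "\<dots> \<le> (\<Sum>c\<in>carrier (G Mod N). \<bar>quot_proj G N g c\<bar>)" using cp AQ BQ 1 by blast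
      finally show ?thesis using pb 1 unfolding A_def B_def by (simp add: algebra_simps)
    next
      case 2
      have "w * (h B - h A) \<le> - k (inv\<^bsub>G Mod N\<^esub> A \<otimes>\<^bsub>G Mod N\<^esub> B) * (h B - h A)"
        using K K2 2 by (intro mult_right_mono) auto
      also have "\<dots> \<le> (\<Sum>c\<in>carrier (G Mod N). \<bar>quot_proj G N g c\<bar>)" using cp AQ BQ 2 by blast
      finally show ?thesis using pb 2 unfolding A_def B_def by (simp add: algebra_simps)
    next
      case 3
      then show ?thesis unfolding A_def B_def by (simp add: sum_nonneg)
    qed
  qed
qed


lemma extremal:
  assumes w: "w > 0" "\<forall>y\<in>grp_supp G f. y \<noteq> \<one>\<^bsub>G\<^esub> \<longrightarrow> f y \<le> - w"
    and gen: "generate G (grp_supp G f) = carrier G"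
    and eqn: "\<forall>c\<in>carrier (G Mod N). phi c = quot_conv G N h (quot_proj G N f) c"
    and M: "\<forall>c\<in>carrier (G Mod N). h c \<le> M" and c0: "c0 \<in> carrier (G Mod N)" "h c0 = M"
    and z: "\<forall>c\<in>carrier (G Mod N). h c = M \<longrightarrow> phi c = 0"
  shows "\<forall>c\<in>carrier (G Mod N). h c = M"
proof -
  interpret G: group G by (rule grp)
  interpret Q: group "G Mod N" by (rule grpQ)
  define k where "k = quot_proj G N f"
  have phi: "\<forall>c\<in>carrier (G Mod N). phi c = (\<Sum>d\<in>carrier (G Mod N). h d * k (inv\<^bsub>G Mod N\<^esub> d \<otimes>\<^bsub>G Mod N\<^esub> c))"
    using eqn unfolding quot_conv_def k_def by simp
  note mp = Q.max_prin[OF finQ k_facts[folded k_def] phi M z]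
  define As where "As = {a\<in>carrier G. h (N #>\<^bsub>G\<^esub> a) = M}"
  have Asub: "As \<subseteq> carrier G" unfolding As_def by auto
  have cl1: "\<forall>a\<in>As. \<forall>y\<in>grp_supp G f. a \<otimes>\<^bsub>G\<^esub> y \<in> As"
  proof (intro ballI, rule ccontr)
    fix a y assume a: "a \<in> As" and y: "y \<in> grp_supp G f" and n: "a \<otimes>\<^bsub>G\<^esub> y \<notin> As"
    have ac: "a \<in> carrier G" and hA: "h (N #>\<^bsub>G\<^esub> a) = M" using a unfolding As_def by auto
    have yc: "y \<in> carrier G" using y unfolding grp_supp_def by auto
    have ayc: "a \<otimes>\<^bsub>G\<^esub> y \<in> carrier G" using ac yc by simp
    have AQ: "N #>\<^bsub>G\<^esub> a \<in> carrier (G Mod N)" using Qdesc ac by blast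
    have BQ: "N #>\<^bsub>G\<^esub> (a \<otimes>\<^bsub>G\<^esub> y) \<in> carrier (G Mod N)" using Qdesc ayc by blast
    have hB: "h (N #>\<^bsub>G\<^esub> (a \<otimes>\<^bsub>G\<^esub> y)) < M" using n ayc M BQ unfolding As_def
      by (metis (mono_tags, lifting) mem_Collect_eq order_less_le)
    have ne: "N #>\<^bsub>G\<^esub> (a \<otimes>\<^bsub>G\<^esub> y) \<noteq> N #>\<^bsub>G\<^esub> a" using hA hB by auto
    have e: "y \<noteq> \<one>\<^bsub>G\<^esub>" "k (inv\<^bsub>G Mod N\<^esub> (N #>\<^bsub>G\<^esub> (a \<otimes>\<^bsub>G\<^esub> y)) \<otimes>\<^bsub>G Mod N\<^esub> (N #>\<^bsub>G\<^esub> a)) \<le> f y"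
      using edge[OF ac y ne] unfolding k_def by auto
    have "k (inv\<^bsub>G Mod N\<^esub> (N #>\<^bsub>G\<^esub> (a \<otimes>\<^bsub>G\<^esub> y)) \<otimes>\<^bsub>G Mod N\<^esub> (N #>\<^bsub>G\<^esub> a)) = 0"
      using mp[OF AQ hA BQ hB] .
    then show False using e w y by force
  qed
  have cl2: "\<forall>a\<in>As. \<forall>y\<in>grp_supp G f. a \<otimes>\<^bsub>G\<^esub> inv\<^bsub>G\<^esub> y \<in> As"
    using cl1 supp_inv by blast
  have Ssub: "grp_supp G f \<subseteq> carrier G" unfolding grp_supp_def by auto
  have clo: "\<forall>x\<in>carrier G. \<forall>a\<in>As. a \<otimes>\<^bsub>G\<^esub> x \<in> As"
    using G.closure_gen[OF _ Ssub Asub cl1 cl2] gen by blast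
  obtain a0 where a0: "a0 \<in> carrier G" "c0 = N #>\<^bsub>G\<^esub> a0" using c0 Qdesc by blast
  have a0A: "a0 \<in> As" using a0 c0 unfolding As_def by simp
  show ?thesis
  proof
    fix c assume "c \<in> carrier (G Mod N)"
    then obtain b where b: "b \<in> carrier G" "c = N #>\<^bsub>G\<^esub> b" using Qdesc by blast
    have "a0 \<otimes>\<^bsub>G\<^esub> (inv\<^bsub>G\<^esub> a0 \<otimes>\<^bsub>G\<^esub> b) \<in> As" using clo a0A a0 b by simp
    moreover have "a0 \<otimes>\<^bsub>G\<^esub> (inv\<^bsub>G\<^esub> a0 \<otimes>\<^bsub>G\<^esub> b) = b" using a0 b by (simp add: G.m_assoc[symmetric])
    ultimately show "h c = M" using b unfolding As_def by simp
  qed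
qed

lemma nonzero_rep:
  assumes "c \<in> carrier (G Mod N)" "quot_proj G N g c \<noteq> 0"
  shows "\<exists>b\<in>grp_supp G g. c = N #>\<^bsub>G\<^esub> b"
proof -
  obtain t where t: "t \<in> c \<inter> grp_supp G g" using assms(2) unfolding quot_proj_def
    by (metis empty_iff sum.empty subsetI subset_antisym)
  obtain a where a: "a \<in> carrier G" "c = N #>\<^bsub>G\<^esub> a" using assms(1) Qdesc by blast
  show ?thesis using coset_rep[OF a(1)] t a by auto
qed

end


lemma conv_neg: "quot_conv G N (\<lambda>x. - h x) k c = - quot_conv G N h k c"
  unfolding quot_conv_def by (simp add: sum_negf)

theorem lemma5p4:
  fixes G :: "('a, 'b) monoid_scheme" and \<Gamma>n :: "nat \<Rightarrow> 'a set"
    and f g :: "'a \<Rightarrow> real"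
  assumes "group G"
    and "finitely_generated G"
    and "infinite (carrier G)"
    and "\<And>n. \<Gamma>n n \<lhd> G"
    and "\<And>n. finite (carrier (G Mod \<Gamma>n n))"
    and "well_balanced G f"
    and "in_group_ring G g"
  shows "\<exists>C>0. \<forall>n. \<forall>h :: 'a set \<Rightarrow> real.
           (\<forall>c\<in>carrier (G Mod \<Gamma>n n).
              quot_proj G (\<Gamma>n n) g c = quot_conv G (\<Gamma>n n) h (quot_proj G (\<Gamma>n n) f) c)
           \<longrightarrow> Max (h ` carrier (G Mod \<Gamma>n n)) - Min (h ` carrier (G Mod \<Gamma>n n)) \<le> C"
proof -
  interpret G: group G by (rule assms(1))
  note wb = assms(6) and gr = assms(7)
  define S where "S = grp_supp G f"
  define Gn where "Gn = (\<Sum>t\<in>grp_supp G g. \<bar>g t\<bar>)"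
  define w where "w = Min (insert 1 ((\<lambda>y. - f y) ` (S - {\<one>\<^bsub>G\<^esub>})))"
  have finS: "finite S" using wb unfolding well_balanced_def in_group_ring_def S_def by blast
  have Ssub: "S \<subseteq> carrier G" unfolding S_def grp_supp_def by auto
  have gen: "generate G S = carrier G" using wb unfolding well_balanced_def S_def by blast
  have wpos: "w > 0" unfolding w_def
  proof (subst Min_gr_iff)
    show "finite (insert 1 ((\<lambda>y. - f y) ` (S - {\<one>\<^bsub>G\<^esub>})))" using finS by simp
    show "\<forall>a\<in>insert 1 ((\<lambda>y. - f y) ` (S - {\<one>\<^bsub>G\<^esub>})). 0 < a"
    proof
      fix a assume "a \<in> insert 1 ((\<lambda>y. - f y) ` (S - {\<one>\<^bsub>G\<^esub>}))"
      then consider "a = 1" | y where "y \<in> S" "y \<noteq> \<one>\<^bsub>G\<^esub>" "a = - f y" by auto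
      then show "0 < a"
      proof cases
        case 2
        have yc: "y \<in> carrier G" "f y \<noteq> 0" using 2(1) unfolding S_def grp_supp_def by auto
        moreover have "\<forall>s\<in>carrier G. s \<noteq> \<one>\<^bsub>G\<^esub> \<longrightarrow> f s \<le> 0" using wb unfolding well_balanced_def by blast
        ultimately have "f y \<le> 0" "f y \<noteq> 0" using 2(2) by auto
        then show ?thesis using 2 by simp
      qed simp
    qed
  qed simp
  have wle: "\<forall>y\<in>grp_supp G f. y \<noteq> \<one>\<^bsub>G\<^esub> \<longrightarrow> f y \<le> - w"
  proof (intro ballI impI)
    fix y assume "y \<in> grp_supp G f" "y \<noteq> \<one>\<^bsub>G\<^esub>"
    then have "w \<le> - f y" unfolding w_def S_def using finS[unfolded S_def] by (intro Min_le) auto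
    then show "f y \<le> - w" by simp
  qed
  define L where "L = Gn / w"
  have Gn0: "Gn \<ge> 0" unfolding Gn_def by (simp add: sum_nonneg)
  have L0: "L \<ge> 0" unfolding L_def using Gn0 wpos by simp
  define P where "P = (\<lambda>x m. \<forall>F::'a\<Rightarrow>real. \<forall>L\<ge>0. (\<forall>a\<in>carrier G. \<forall>y\<in>S. \<bar>F a - F (a \<otimes>\<^bsub>G\<^esub> y)\<bar> \<le> L)
            \<longrightarrow> (\<forall>a\<in>carrier G. \<bar>F a - F (a \<otimes>\<^bsub>G\<^esub> x)\<bar> \<le> real m * L))"
  have ex: "\<forall>x\<in>carrier G. \<exists>m. P x m"
  proof
    fix x assume "x \<in> carrier G"
    then have "x \<in> generate G S" using gen by simp
    from G.word_bound[OF this Ssub] show "\<exists>m. P x m" unfolding P_def .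
  qed
  then obtain mf where mf: "\<forall>x\<in>carrier G. P x (mf x)" using bchoice[OF ex] by blast
  define R where "R = Max (insert 0 ((\<lambda>p. mf (inv\<^bsub>G\<^esub> (fst p) \<otimes>\<^bsub>G\<^esub> snd p)) ` (grp_supp G g \<times> grp_supp G g)))"
  have fing: "finite (grp_supp G g)" using gr unfolding in_group_ring_def by blast
  have Rge: "mf (inv\<^bsub>G\<^esub> b1 \<otimes>\<^bsub>G\<^esub> b2) \<le> R" if "b1 \<in> grp_supp G g" "b2 \<in> grp_supp G g" for b1 b2
    unfolding R_def
  proof (rule Max_ge)
    show "finite (insert 0 ((\<lambda>p. mf (inv\<^bsub>G\<^esub> (fst p) \<otimes>\<^bsub>G\<^esub> snd p)) ` (grp_supp G g \<times> grp_supp G g)))"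
      using fing by simp
    have "(b1, b2) \<in> grp_supp G g \<times> grp_supp G g" using that by simp
    then show "mf (inv\<^bsub>G\<^esub> b1 \<otimes>\<^bsub>G\<^esub> b2) \<in> insert 0 ((\<lambda>p. mf (inv\<^bsub>G\<^esub> (fst p) \<otimes>\<^bsub>G\<^esub> snd p)) ` (grp_supp G g \<times> grp_supp G g))"
      by (intro insertI2 rev_image_eqI[of "(b1, b2)"]) auto
  qed
  define C where "C = real R * L + 1"
  have Cpos: "C > 0" unfolding C_def using L0 by (metis add.commute add_pos_nonneg of_nat_0_le_iff zero_le_mult_iff zero_less_one)
  show ?thesis
  proof (intro exI[of _ C] conjI Cpos allI impI)
    fix n and h :: "'a set \<Rightarrow> real"
    define N where "N = \<Gamma>n n"
    assume eqn0: "\<forall>c\<in>carrier (G Mod \<Gamma>n n).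
              quot_proj G (\<Gamma>n n) g c = quot_conv G (\<Gamma>n n) h (quot_proj G (\<Gamma>n n) f) c"
    then have eqn: "\<forall>c\<in>carrier (G Mod N). quot_proj G N g c = quot_conv G N h (quot_proj G N f) c"
      unfolding N_def .
    have nrm: "N \<lhd> G" and finQ: "finite (carrier (G Mod N))" unfolding N_def using assms(4,5) by auto
    define Q where "Q = carrier (G Mod N)"
    have "N #>\<^bsub>G\<^esub> \<one>\<^bsub>G\<^esub> = N"
      using G.coset_mult_one subgroup.subset[OF normal_imp_subgroup[OF nrm]] by blast
    then have NQ: "N \<in> Q" unfolding Q_def Qdesc[OF nrm finQ wb] by (intro bexI[of _ "\<one>\<^bsub>G\<^esub>"]) auto
    have finhQ: "finite (h ` Q)" "h ` Q \<noteq> {}" using finQ NQ unfolding Q_def by auto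
    define M where "M = Max (h ` Q)"
    define m where "m = Min (h ` Q)"
    have Mb: "\<forall>c\<in>Q. h c \<le> M" unfolding M_def using finhQ by auto
    have mb: "\<forall>c\<in>Q. m \<le> h c" unfolding m_def using finhQ by auto
    obtain c1 where c1: "c1 \<in> Q" "h c1 = M" unfolding M_def using Max_in[OF finhQ] by auto
    obtain c2 where c2: "c2 \<in> Q" "h c2 = m" unfolding m_def using Min_in[OF finhQ] by auto
    have lipF: "\<forall>a\<in>carrier G. \<forall>y\<in>S. \<bar>h (N #>\<^bsub>G\<^esub> a) - h (N #>\<^bsub>G\<^esub> (a \<otimes>\<^bsub>G\<^esub> y))\<bar> \<le> L"
    proof (intro ballI)
      fix a y assume a: "a \<in> carrier G" and y: "y \<in> S"
      have "\<bar>h (N #>\<^bsub>G\<^esub> a) - h (N #>\<^bsub>G\<^esub> (a \<otimes>\<^bsub>G\<^esub> y))\<bar> * w \<le> Gn"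
        using lip[OF nrm finQ wb gr eqn a y[unfolded S_def] wpos wle] unfolding Gn_def .
      then show "\<bar>h (N #>\<^bsub>G\<^esub> a) - h (N #>\<^bsub>G\<^esub> (a \<otimes>\<^bsub>G\<^esub> y))\<bar> \<le> L"
        unfolding L_def using wpos by (simp add: pos_le_divide_eq)
    qed
    show "Max (h ` carrier (G Mod \<Gamma>n n)) - Min (h ` carrier (G Mod \<Gamma>n n)) \<le> C"
    proof -
      have goal: "M - m \<le> C"
      proof (cases "\<exists>c\<in>Q. h c = M \<and> quot_proj G N g c \<noteq> 0")
        case False
        then have z: "\<forall>c\<in>carrier (G Mod N). h c = M \<longrightarrow> quot_proj G N g c = 0" unfolding Q_def by blast
        have "\<forall>c\<in>Q. h c = M"
          using extremal[OF nrm finQ wb wpos wle gen[unfolded S_def] eqn Mb[unfolded Q_def] c1[unfolded Q_def] z] unfolding Q_def .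
        then show ?thesis using c2 Cpos by auto
      next
        case True
        then obtain d1 where d1: "d1 \<in> Q" "h d1 = M" "quot_proj G N g d1 \<noteq> 0" by blast
        show ?thesis
        proof (cases "\<exists>c\<in>Q. h c = m \<and> quot_proj G N g c \<noteq> 0")
          case False
          have eqn': "\<forall>c\<in>carrier (G Mod N). - quot_proj G N g c = quot_conv G N (\<lambda>x. - h x) (quot_proj G N f) c"
            using eqn by (simp add: conv_neg)
          have z: "\<forall>c\<in>carrier (G Mod N). - h c = - m \<longrightarrow> - quot_proj G N g c = 0" using False unfolding Q_def by auto
          have mb': "\<forall>c\<in>carrier (G Mod N). - h c \<le> - m" using mb unfolding Q_def by auto
          have c2': "c2 \<in> carrier (G Mod N)" "- h c2 = - m" using c2 unfolding Q_def by auto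
          have "\<forall>c\<in>Q. - h c = - m"
            using extremal[OF nrm finQ wb wpos wle gen[unfolded S_def] eqn' mb' c2' z] unfolding Q_def .
          then show ?thesis using c1 Cpos by auto
        next
          case True
          then obtain d2 where d2: "d2 \<in> Q" "h d2 = m" "quot_proj G N g d2 \<noteq> 0" by blast
          obtain b1 where b1: "b1 \<in> grp_supp G g" "d1 = N #>\<^bsub>G\<^esub> b1"
            using nonzero_rep[OF nrm finQ wb] d1 unfolding Q_def by blast
          obtain b2 where b2: "b2 \<in> grp_supp G g" "d2 = N #>\<^bsub>G\<^esub> b2"
            using nonzero_rep[OF nrm finQ wb] d2 unfolding Q_def by blast
          have bc: "b1 \<in> carrier G" "b2 \<in> carrier G" using b1 b2 unfolding grp_supp_def by auto
          define x where "x = inv\<^bsub>G\<^esub> b1 \<otimes>\<^bsub>G\<^esub> b2"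
          have xc: "x \<in> carrier G" unfolding x_def using bc by simp
          have bx: "b1 \<otimes>\<^bsub>G\<^esub> x = b2" unfolding x_def using bc by (simp add: G.m_assoc[symmetric])
          have Pm: "P x (mf x)" using mf xc by blast
          have lipF': "\<forall>a\<in>carrier G. \<forall>y\<in>S. \<bar>(\<lambda>a. h (N #>\<^bsub>G\<^esub> a)) a - (\<lambda>a. h (N #>\<^bsub>G\<^esub> a)) (a \<otimes>\<^bsub>G\<^esub> y)\<bar> \<le> L"
            using lipF by simp
          have "\<forall>a\<in>carrier G. \<bar>(\<lambda>a. h (N #>\<^bsub>G\<^esub> a)) a - (\<lambda>a. h (N #>\<^bsub>G\<^esub> a)) (a \<otimes>\<^bsub>G\<^esub> x)\<bar> \<le> real (mf x) * L"
            using Pm unfolding P_def apply -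
            apply (erule allE[of _ "\<lambda>a. h (N #>\<^bsub>G\<^esub> a)"])
            apply (erule allE[of _ L])
            using L0 lipF' by blast
          then have st1: "\<bar>h (N #>\<^bsub>G\<^esub> b1) - h (N #>\<^bsub>G\<^esub> (b1 \<otimes>\<^bsub>G\<^esub> x))\<bar> \<le> real (mf x) * L"
            using bc(1) by blast
          have st2: "real (mf x) * L \<le> real R * L" using Rge[OF b1(1) b2(1)] L0 unfolding x_def
            by (intro mult_right_mono) auto
          have "M - m = h (N #>\<^bsub>G\<^esub> b1) - h (N #>\<^bsub>G\<^esub> (b1 \<otimes>\<^bsub>G\<^esub> x))"
            using d1(2) d2(2) b1(2) b2(2) bx by metis
          then have "M - m \<le> real R * L" using st1 st2 by linarith
          then show ?thesis unfolding C_def by simp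
        qed
      qed
      then show ?thesis unfolding M_def m_def Q_def N_def .
    qed
  qed
qed

end
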